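(* Let $X\in RV_+^p(\alpha)$ with $n\Pr(b_n^{-1}X\in\cdot)\stackrel{v}{\to}\nu_X(\cdot)$, and suppose $X$ satisfies the lower-tail condition $n\Pr\{X_i\le\exp(-kb_n)\}\to0$ for every $k>0$ and $i=1,\ldots,p$. Then for $a\in\mathbb{R}$, with $a\circ X=t\{a\,t^{-1}(X)\}$, $$n\Pr\{b_n^{-1}(a\circ X)\in\cdot\}\stackrel{v}{\to}a^{\alpha}\nu_X(\cdot)\ \text{if } a>0,\qquad n\Pr\{b_n^{-1}(a\circ X)\in\cdot\}\stackrel{v}{\to}0\ \text{if } a\le0,$$ vague convergence in the space of nonnegative Radon measures on $[0,\infty]^p\setminus\{0\}$.
   Context: $t(y)=\log\{1+\exp(y)\}$, $t^{-1}(x)=\log\{\exp(x)-1\}$, applied componentwise, extended by $t(-\infty)=0$, $t^{-1}(0)=-\infty$, $t(\infty)=t^{-1}(\infty)=\infty$. A random vector $X$ with values in $[0,\infty)^p$ is in $RV_+^p(\alpha)$ if there exist $b_n\to\infty$ and a nonzero measure $\nu_X$ with $n\Pr(b_n^{-1}X\in\cdot)\stackrel{v}{\to}\nu_X(\cdot)$ vaguely in the nonnegative Radon measures on $[0,\infty]^p\setminus\{0\}$. *)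

theory Defs
  imports "HOL-Probability.Probability"
begin

definition tfun :: "ereal \<Rightarrow> ennreal" where
  "tfun y = (case y of ereal r \<Rightarrow> ennreal (ln (1 + exp r)) | PInfty \<Rightarrow> \<infinity> | MInfty \<Rightarrow> 0)"

definition tinv :: "real \<Rightarrow> ereal" where
  "tinv x = (if x = 0 then -\<infinity> else ereal (ln (exp x - 1)))"

definition tcirc :: "real \<Rightarrow> ('p \<Rightarrow> real) \<Rightarrow> ('p \<Rightarrow> ennreal)" where
  "tcirc a x = (\<lambda>i. tfun (ereal a * tinv (x i)))"

definition emb :: "('p \<Rightarrow> real) \<Rightarrow> ('p \<Rightarrow> ennreal)" where
  "emb x = (\<lambda>i. ennreal (x i))"

definition scalev :: "real \<Rightarrow> ('p \<Rightarrow> ennreal) \<Rightarrow> ('p \<Rightarrow> ennreal)" where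
  "scalev c v = (\<lambda>i. v i / ennreal c)"

text \<open>Vague convergence of measures on E = [0,inf]^p minus {0}: convergence of integrals
  of all nonnegative continuous functions with compact support in E, i.e. continuous on the
  compact space [0,inf]^p and vanishing on a neighbourhood of 0.\<close>
definition vague_conv ::
  "(nat \<Rightarrow> ('p::finite \<Rightarrow> ennreal) measure) \<Rightarrow> ('p \<Rightarrow> ennreal) measure \<Rightarrow> bool" where
  "vague_conv \<mu> \<nu> \<longleftrightarrow>
     (\<forall>f :: ('p \<Rightarrow> ennreal) \<Rightarrow> real.
        continuous_on UNIV f \<and> (\<forall>x. 0 \<le> f x) \<and>
        (\<exists>U. open U \<and> (\<lambda>_. 0) \<in> U \<and> (\<forall>x\<in>U. f x = 0)) \<longrightarrow>
        ((\<lambda>n. \<integral>\<^sup>+ x. ennreal (f x) \<partial>(\<mu> n)) \<longlongrightarrow> (\<integral>\<^sup>+ x. ennreal (f x) \<partial>\<nu>)) sequentially)"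

text \<open>Nonnegative Radon measure on E (extended to [0,inf]^p with no mass at 0).\<close>
definition radon_E :: "('p::finite \<Rightarrow> ennreal) measure \<Rightarrow> bool" where
  "radon_E \<nu> \<longleftrightarrow> sets \<nu> = sets borel \<and> emeasure \<nu> {\<lambda>_. 0} = 0 \<and>
     (\<forall>K. compact K \<and> (\<lambda>_. 0) \<notin> K \<longrightarrow> emeasure \<nu> K < \<infinity>)"

definition RV_plus ::
  "real \<Rightarrow> 'a measure \<Rightarrow> ('a \<Rightarrow> 'p::finite \<Rightarrow> real) \<Rightarrow> (nat \<Rightarrow> real) \<Rightarrow> ('p \<Rightarrow> ennreal) measure \<Rightarrow> bool"
  where
  "RV_plus \<alpha> M X b \<nu> \<longleftrightarrow>
     prob_space M \<and> X \<in> borel_measurable M \<and> (\<forall>\<omega>\<in>space M. \<forall>i. 0 \<le> X \<omega> i) \<and>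
     \<alpha> > 0 \<and> filterlim b at_top sequentially \<and>
     radon_E \<nu> \<and> emeasure \<nu> (space \<nu>) \<noteq> 0 \<and>
     (\<forall>t>0. \<forall>A\<in>sets borel.
        emeasure \<nu> ((\<lambda>x. \<lambda>i. ennreal t * x i) ` A) = ennreal (t powr (-\<alpha>)) * emeasure \<nu> A) \<and>
     vague_conv (\<lambda>n. scale_measure (of_nat n) (distr M borel (\<lambda>\<omega>. scalev (b n) (emb (X \<omega>))))) \<nu>"

end

theory Submission
  imports Defs
begin


lemma tendsto_fun_coord:
  fixes g :: "'b \<Rightarrow> 'p::finite \<Rightarrow> 'c::topological_space"
  assumes "\<And>i. ((\<lambda>n. g n i) \<longlongrightarrow> l i) F"
  shows "(g \<longlongrightarrow> l) F"
proof (rule topological_tendstoI)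
  fix S :: "('p \<Rightarrow> 'c) set" assume S: "open S" "l \<in> S"
  then have "openin (product_topology (\<lambda>i. euclidean) UNIV) S"
    by (simp add: euclidean_product_topology)
  then obtain V where V: "\<forall>i\<in>UNIV. openin euclidean (V i)" "l \<in> PiE UNIV V" "PiE UNIV V \<subseteq> S"
    using S(2) unfolding openin_product_topology_alt by blast
  have "\<forall>i. eventually (\<lambda>n. g n i \<in> V i) F"
  proof
    fix i
    have "l i \<in> V i" using V(2) by (auto simp: PiE_iff)
    then show "eventually (\<lambda>n. g n i \<in> V i) F"
      using V(1) assms[of i] by (auto simp: tendsto_def)
  qed
  then have "eventually (\<lambda>n. \<forall>i. g n i \<in> V i) F"
    by (simp add: eventually_all_finite)
  then show "eventually (\<lambda>n. g n \<in> S) F"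
    by eventually_elim (use V(3) in auto)
qed

lemma open_box: "open {x::'p::finite \<Rightarrow> ennreal. \<forall>i. x i < c}"
proof -
  have "{x::'p \<Rightarrow> ennreal. \<forall>i. x i < c} = (\<Inter>i. (\<lambda>x. x i) -` {..<c})" by auto
  also have "open \<dots>"
    by (intro open_INT) (auto intro!: open_vimage continuous_on_product_coordinates)
  finally show ?thesis .
qed

lemma compact_UNIV_fun: "compact (UNIV :: ('p::finite \<Rightarrow> ennreal) set)"
proof -
  have "compact_space (euclidean::ennreal topology)"
    by (simp add: compact_space_def compact_UNIV)
  then have "compact_space (product_topology (\<lambda>i. euclidean::ennreal topology) UNIV)"
    by (simp add: compact_space_product_topology)
  then show ?thesis
    by (simp add: euclidean_product_topology compact_space_def)
qed

lemma box_in_open: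
  fixes U :: "('p::finite \<Rightarrow> ennreal) set"
  assumes "open U" "(\<lambda>_. 0) \<in> U"
  shows "\<exists>d>0. \<forall>x. (\<forall>i. x i < ennreal d) \<longrightarrow> x \<in> U"
proof (rule ccontr)
  assume "\<not> ?thesis"
  then have "\<forall>n. \<exists>x. (\<forall>i. x i < ennreal (1 / Suc n)) \<and> x \<notin> U"
    by auto
  then obtain xs where xs: "\<And>n. (\<forall>i. xs n i < ennreal (1 / Suc n)) \<and> xs n \<notin> U"
    by metis
  have "(xs \<longlonglongrightarrow> (\<lambda>_. 0))"
  proof (rule tendsto_fun_coord)
    fix i
    have 1: "((\<lambda>n. ennreal (1 / Suc n)) \<longlonglongrightarrow> ennreal 0)"
      by (intro tendsto_ennrealI LIMSEQ_inverse_real_of_nat[unfolded inverse_eq_divide])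
    have 2: "xs n i \<le> ennreal (1 / Suc n)" for n
      using xs[of n] less_imp_le by blast
    show "(\<lambda>n. xs n i) \<longlonglongrightarrow> 0"
    proof (rule tendsto_sandwich[of "\<lambda>_. 0" _ _ "\<lambda>n. ennreal (1 / Suc n)"])
      show "eventually (\<lambda>n. 0 \<le> xs n i) sequentially" by simp
      show "eventually (\<lambda>n. xs n i \<le> ennreal (1 / Suc n)) sequentially"
        using 2 by simp
      show "(\<lambda>n. 0::ennreal) \<longlonglongrightarrow> 0" by simp
      show "(\<lambda>n. ennreal (1 / Suc n)) \<longlonglongrightarrow> 0" using 1 by simp
    qed
  qed
  then have "eventually (\<lambda>n. xs n \<in> U) sequentially"
    using assms by (auto simp: tendsto_def)
  then obtain N where "\<forall>n\<ge>N. xs n \<in> U" by (auto simp: eventually_sequentially)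
  then show False using xs[of N] by auto
qed

lemma ennreal_close_tendsto:
  fixes s t :: "nat \<Rightarrow> ennreal"
  assumes "s \<longlonglongrightarrow> L" "e \<longlonglongrightarrow> 0" "\<And>n. s n \<le> t n + e n" "\<And>n. t n \<le> s n + e n"
    "\<And>n. e n < \<infinity>"
  shows "t \<longlonglongrightarrow> L"
proof (rule tendsto_sandwich[of "\<lambda>n. s n - e n" _ _ "\<lambda>n. s n + e n"])
  show "eventually (\<lambda>n. s n - e n \<le> t n) sequentially"
  proof (intro always_eventually allI)
    fix n show "s n - e n \<le> t n"
      using assms(3)[of n] assms(5)[of n] by (auto simp: ennreal_minus_le_iff add.commute)
  qed
  show "eventually (\<lambda>n. t n \<le> s n + e n) sequentially"
    using assms(4) by auto
  have "(\<lambda>n. s n - e n) \<longlonglongrightarrow> L - 0"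
    using assms(1,2) by (intro tendsto_diff_ennreal_general) auto
  then show "(\<lambda>n. s n - e n) \<longlonglongrightarrow> L" by simp
  have "(\<lambda>n. s n + e n) \<longlonglongrightarrow> L + 0"
    using assms(1,2) by (intro tendsto_add)
  then show "(\<lambda>n. s n + e n) \<longlonglongrightarrow> L" by simp
qed

lemma unif_close:
  fixes f :: "('p::finite \<Rightarrow> ennreal) \<Rightarrow> real"
  assumes f: "continuous_on UNIV f" and e: "e > 0"
  shows "\<exists>h>0. \<forall>x y. (\<forall>i. x i \<le> y i + ennreal h \<and> y i \<le> x i + ennreal h) \<longrightarrow> \<bar>f x - f y\<bar> < e"
proof (rule ccontr)
  assume "\<not> ?thesis"
  then have "\<forall>n. \<exists>x y. (\<forall>i. x i \<le> y i + ennreal (1 / Suc n) \<and> y i \<le> x i + ennreal (1 / Suc n))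
      \<and> \<bar>f x - f y\<bar> \<ge> e"
    by (metis not_less of_nat_0_less_iff zero_less_Suc zero_less_divide_1_iff)
  then obtain xs ys where xy: "\<And>n. (\<forall>i. xs n i \<le> ys n i + ennreal (1 / Suc n) \<and> ys n i \<le> xs n i + ennreal (1 / Suc n))
      \<and> \<bar>f (xs n) - f (ys n)\<bar> \<ge> e"
    by metis
  have "seq_compact (UNIV :: ('p \<Rightarrow> ennreal) set)"
    by (rule compact_imp_seq_compact[OF compact_UNIV_fun])
  then obtain l r where r: "strict_mono r" and lim: "(xs \<circ> r) \<longlonglongrightarrow> l"
    unfolding seq_compact_def by blast
  have e0: "(\<lambda>n. ennreal (1 / Suc (r n))) \<longlonglongrightarrow> 0"
  proof -
    have "(\<lambda>n. 1 / real (Suc n)) \<longlonglongrightarrow> 0"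
      by (rule LIMSEQ_inverse_real_of_nat[unfolded inverse_eq_divide])
    then have "(\<lambda>n. 1 / real (Suc (r n))) \<longlonglongrightarrow> 0"
      using LIMSEQ_subseq_LIMSEQ[OF _ r] by (auto simp: o_def)
    then have "(\<lambda>n. ennreal (1 / Suc (r n))) \<longlonglongrightarrow> ennreal 0"
      by (rule tendsto_ennrealI)
    then show ?thesis by simp
  qed
  have lim2: "(ys \<circ> r) \<longlonglongrightarrow> l"
  proof (rule tendsto_fun_coord)
    fix i
    have "(\<lambda>n. xs (r n) i) \<longlonglongrightarrow> l i"
      using continuous_on_tendsto_compose[OF continuous_on_product_coordinates lim, of i]
      by (simp add: o_def)
    then show "(\<lambda>n. (ys \<circ> r) n i) \<longlonglongrightarrow> l i"
      unfolding o_def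
      by (rule ennreal_close_tendsto[OF _ e0]) (use xy in auto)
  qed
  have "(\<lambda>n. f ((xs \<circ> r) n)) \<longlonglongrightarrow> f l"
    by (rule continuous_on_tendsto_compose[OF f lim]) auto
  moreover have "(\<lambda>n. f ((ys \<circ> r) n)) \<longlonglongrightarrow> f l"
    by (rule continuous_on_tendsto_compose[OF f lim2]) auto
  ultimately have "(\<lambda>n. \<bar>f ((xs \<circ> r) n) - f ((ys \<circ> r) n)\<bar>) \<longlonglongrightarrow> \<bar>f l - f l\<bar>"
    by (intro tendsto_intros)
  then have "eventually (\<lambda>n. \<bar>f ((xs \<circ> r) n) - f ((ys \<circ> r) n)\<bar> < e) sequentially"
    using e by (intro order_tendstoD(2)) auto
  then obtain N where "\<forall>n\<ge>N. \<bar>f ((xs \<circ> r) n) - f ((ys \<circ> r) n)\<bar> < e"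
    by (auto simp: eventually_sequentially)
  then show False using xy[of "r N"] by auto
qed


definition Tre :: "real \<Rightarrow> real \<Rightarrow> real" where
  "Tre a x = (if x = 0 then 0 else ln (1 + exp (a * ln (exp x - 1))))"

lemma Tre_nonneg: "Tre a x \<ge> 0"
  unfolding Tre_def by (auto intro!: ln_ge_zero simp: add_increasing2)

lemma tfun_pos:
  assumes "a > 0" "x \<ge> 0"
  shows "tfun (ereal a * tinv x) = ennreal (Tre a x)"
  using assms by (auto simp: tfun_def tinv_def Tre_def)

lemma tfun_zero: "tfun (ereal 0 * tinv x) = ennreal (ln 2)"
proof -
  have h: "ereal 0 * tinv x = ereal 0" by (simp add: zero_ereal_def[symmetric])
  show ?thesis unfolding tfun_def h by (simp only: ereal.case) simp
qed

lemma Tre_bound: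
  assumes a: "a > 0" and x: "x \<ge> 0"
  shows "\<bar>Tre a x - a * x\<bar> \<le> (a + 1) * ln 2"
proof (cases "x = 0")
  case True then show ?thesis using a by (simp add: Tre_def)
next
  case False
  then have xp: "x > 0" using x by simp
  define s where "s = ln (exp x - 1)"
  have em: "exp x - 1 > 0" using xp by simp
  have es: "exp s = exp x - 1" using em by (simp add: s_def)
  have "exp s < exp x" using es by simp
  then have sx: "s < x" by simp
  have T: "Tre a x = ln (1 + exp (a * s))" using False by (simp add: Tre_def s_def)
  have ln2: "ln 2 > (0::real)" by simp
  have up: "Tre a x \<le> a * x + ln 2"
  proof -
    have "exp (a * s) \<le> exp (a * x)" using sx a by simp
    moreover have "1 \<le> exp (a * x)" using a xp by simp
    ultimately have "1 + exp (a * s) \<le> 2 * exp (a * x)" by linarith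
    then have "ln (1 + exp (a * s)) \<le> ln (2 * exp (a * x))"
      by (subst ln_le_cancel_iff) (auto simp: add_pos_pos)
    also have "\<dots> = ln 2 + a * x" by (simp add: ln_mult)
    finally show ?thesis using T by simp
  qed
  have lo: "Tre a x \<ge> a * x - a * ln 2"
  proof (cases "x \<ge> ln 2")
    case True
    then have "exp x \<ge> 2" by (metis exp_le_cancel_iff exp_ln zero_less_numeral)
    then have "exp s \<ge> exp x / 2" using es by simp
    then have "s \<ge> ln (exp x / 2)"
      by (metis exp_gt_zero half_gt_zero_iff ln_exp ln_le_cancel_iff)
    then have "s \<ge> x - ln 2" by (simp add: ln_div)
    then have "a * (x - ln 2) \<le> a * s" using a by (intro mult_left_mono) auto
    then have "a * s \<ge> a * x - a * ln 2" by (simp add: algebra_simps)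
    moreover have "ln (1 + exp (a * s)) \<ge> ln (exp (a * s))"
      by (subst ln_le_cancel_iff) (auto simp: add_pos_pos)
    ultimately show ?thesis using T by simp
  next
    case False
    then have "a * x - a * ln 2 \<le> 0" using a by (simp add: mult_left_mono)
    then show ?thesis using Tre_nonneg[of a x] by linarith
  qed
  have "a * ln 2 \<ge> 0" using a ln2 by simp
  then show ?thesis using up lo ln2 unfolding abs_le_iff distrib_right by linarith
qed

lemma tfun_neg:
  assumes a: "a < 0" and x: "x \<ge> 0" and B: "B \<ge> 2" and ge: "ennreal B \<le> tfun (ereal a * tinv x)"
  shows "x \<le> exp (- (B / (2 * (- a))))"
proof (cases "x = 0")
  case True then show ?thesis by simp
next
  case False
  then have xp: "x > 0" using x by simp
  define s where "s = ln (exp x - 1)"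
  have em: "exp x - 1 > 0" using xp by simp
  have es: "exp s = exp x - 1" using em by (simp add: s_def)
  have "tfun (ereal a * tinv x) = ennreal (ln (1 + exp (a * s)))"
    using False by (simp add: tfun_def tinv_def s_def)
  then have "B \<le> ln (1 + exp (a * s))" using ge B
    by (simp add: ennreal_le_iff2)
  then have "exp B \<le> 1 + exp (a * s)"
    by (metis add_pos_pos exp_gt_zero exp_le_cancel_iff exp_ln zero_less_one)
  moreover have "exp (B - 1) \<le> exp B - 1"
  proof -
    have e1: "exp (1::real) \<ge> 2" using exp_ge_add_one_self[of 1] by simp
    have "exp (B - 1) \<ge> exp 1" using B by simp
    then have "exp (B - 1) * (exp 1 - 1) \<ge> 1 * 1" using e1
      by (intro mult_mono) auto
    moreover have "exp B = exp (B - 1) * exp 1" by (simp add: exp_add[symmetric])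
    ultimately show ?thesis by (simp add: algebra_simps)
  qed
  ultimately have "exp (B - 1) \<le> exp (a * s)" by linarith
  then have "B - 1 \<le> a * s" by (simp only: exp_le_cancel_iff)
  then have "B / 2 \<le> a * s" using B by simp
  then have s_le: "s \<le> - (B / (2 * (- a)))" using a by (simp add: field_simps)
  have "x = ln (1 + exp s)" using es by simp
  also have "\<dots> \<le> exp s" using ln_add_one_self_le_self[of "exp s"] by simp
  also have "\<dots> \<le> exp (- (B / (2 * (- a))))" using s_le by simp
  finally show ?thesis .
qed


lemma tinv_meas[measurable]: "tinv \<in> borel_measurable borel"
  unfolding tinv_def by measurable

lemma tfun_alt: "tfun y = (if y = \<infinity> then \<infinity> else if y = -\<infinity> then 0 else ennreal (ln (1 + exp (real_of_ereal y))))"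
  by (cases y) (auto simp: tfun_def)

lemma tfun_meas[measurable]: "tfun \<in> borel_measurable borel"
  unfolding tfun_alt[abs_def] by measurable

lemma coord_meas:
  fixes X :: "'a \<Rightarrow> 'p::finite \<Rightarrow> 'b::topological_space"
  assumes "X \<in> borel_measurable M"
  shows "(\<lambda>\<omega>. X \<omega> i) \<in> borel_measurable M"
  by (rule measurable_compose[OF assms borel_measurable_continuous_onI]) simp

lemma Y_meas:
  fixes X :: "'a \<Rightarrow> 'p::finite \<Rightarrow> real"
  assumes [measurable]: "X \<in> borel_measurable M"
  shows "(\<lambda>\<omega>. scalev c (tcirc a (X \<omega>))) \<in> borel_measurable M"
  unfolding scalev_def tcirc_def
proof (rule measurable_coordinatewise_then_product)
  fix i
  have [measurable]: "(\<lambda>\<omega>. X \<omega> i) \<in> borel_measurable M" by (rule coord_meas) simp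
  show "(\<lambda>\<omega>. tfun (ereal a * tinv (X \<omega> i)) / ennreal c) \<in> borel_measurable M"
    by measurable
qed

lemma Z_meas:
  fixes X :: "'a \<Rightarrow> 'p::finite \<Rightarrow> real"
  assumes [measurable]: "X \<in> borel_measurable M"
  shows "(\<lambda>\<omega>. scalev c (emb (X \<omega>))) \<in> borel_measurable M"
  unfolding scalev_def emb_def
proof (rule measurable_coordinatewise_then_product)
  fix i
  have [measurable]: "(\<lambda>\<omega>. X \<omega> i) \<in> borel_measurable M" by (rule coord_meas) simp
  show "(\<lambda>\<omega>. ennreal (X \<omega> i) / ennreal c) \<in> borel_measurable M"
    by measurable
qed


definition phi :: "real \<Rightarrow> ennreal \<Rightarrow> real" where
  "phi c s = max 0 ((2 / c) * enn2real (min s (ennreal c)) - 1)"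

definition gfun :: "real \<Rightarrow> ('p::finite \<Rightarrow> ennreal) \<Rightarrow> real" where
  "gfun c x = min 1 (\<Sum>i\<in>UNIV. phi c (x i))"

lemma cont_enn2real_min: "continuous_on UNIV (\<lambda>s. enn2real (min s (ennreal c)))"
proof -
  have "isCont (\<lambda>s. enn2real (min s (ennreal c))) x" for x
  proof -
    have "((\<lambda>s. min s (ennreal c)) \<longlongrightarrow> min x (ennreal c)) (at x)"
      by (intro tendsto_min tendsto_ident_at tendsto_const)
    moreover have "min x (ennreal c) = ennreal (enn2real (min x (ennreal c)))"
      by (metis ennreal_enn2real_if ennreal_less_top min.strict_coboundedI2 top.not_eq_extremum)
    ultimately have "((\<lambda>s. min s (ennreal c)) \<longlongrightarrow> ennreal (enn2real (min x (ennreal c)))) (at x)"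
      by simp
    then show ?thesis unfolding isCont_def
      by (rule tendsto_enn2real) simp
  qed
  then show ?thesis by (simp add: continuous_at_imp_continuous_on)
qed

lemma phi_cont: "continuous_on UNIV (phi c)"
  unfolding phi_def[abs_def]
  by (intro continuous_intros cont_enn2real_min)

lemma phi_one: "c > 0 \<Longrightarrow> s \<ge> ennreal c \<Longrightarrow> phi c s = 1"
  by (simp add: phi_def min_absorb2)

lemma phi_zero:
  assumes c: "c > 0" and s: "s \<le> ennreal (c / 2)"
  shows "phi c s = 0"
proof -
  have "min s (ennreal c) \<le> ennreal (c / 2)" using s by (simp add: min.coboundedI1)
  then have "enn2real (min s (ennreal c)) \<le> c / 2" using c by (intro enn2real_leI) auto
  then have "(2 / c) * enn2real (min s (ennreal c)) \<le> 1" using c by (simp add: field_simps)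
  then show ?thesis by (simp add: phi_def)
qed

lemma phi_nonneg: "phi c s \<ge> 0" by (simp add: phi_def)

lemma gfun_cont: "continuous_on UNIV (gfun c)"
  unfolding gfun_def[abs_def]
  by (intro continuous_intros continuous_on_compose2[OF phi_cont continuous_on_product_coordinates]) auto

lemma gfun_nonneg: "gfun c x \<ge> 0"
  by (simp add: gfun_def sum_nonneg phi_nonneg)

lemma gfun_le1: "gfun c x \<le> 1"
  by (simp add: gfun_def)

lemma gfun_one: "c > 0 \<Longrightarrow> x i \<ge> ennreal c \<Longrightarrow> gfun c x = 1"
proof -
  assume "c > 0" "x i \<ge> ennreal c"
  then have "phi c (x i) = 1" by (rule phi_one)
  moreover have "phi c (x i) \<le> (\<Sum>j\<in>UNIV. phi c (x j))"
    by (rule member_le_sum) (auto simp: phi_nonneg)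
  ultimately show "gfun c x = 1" by (simp add: gfun_def)
qed

lemma gfun_zero: "c > 0 \<Longrightarrow> (\<forall>i. x i \<le> ennreal (c / 2)) \<Longrightarrow> gfun c x = 0"
  by (simp add: gfun_def phi_zero)


lemma sa_cont: "continuous_on UNIV (\<lambda>x::'p::finite \<Rightarrow> ennreal. \<lambda>i. ennreal a * x i)"
  by (intro continuous_on_coordinatewise_then_product ennreal_continuous_on_cmult
      continuous_on_product_coordinates) simp

lemma sa_meas: "(\<lambda>x::'p::finite \<Rightarrow> ennreal. \<lambda>i. ennreal a * x i) \<in> borel_measurable borel"
  by (rule borel_measurable_continuous_onI[OF sa_cont])

lemma push:
  fixes \<nu> :: "('p::finite \<Rightarrow> ennreal) measure"
  assumes a: "a > 0" and sets: "sets \<nu> = sets borel"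
    and hom: "\<forall>t>0. \<forall>A\<in>sets borel. emeasure \<nu> ((\<lambda>x. \<lambda>i. ennreal t * x i) ` A) = ennreal (t powr (-\<alpha>)) * emeasure \<nu> A"
  shows "distr \<nu> borel (\<lambda>x i. ennreal a * x i) = scale_measure (ennreal (a powr \<alpha>)) \<nu>"
proof (rule measure_eqI)
  show "sets (distr \<nu> borel (\<lambda>x i. ennreal a * x i)) = sets (scale_measure (ennreal (a powr \<alpha>)) \<nu>)"
    using sets by simp
  fix A assume "A \<in> sets (distr \<nu> borel (\<lambda>x i. ennreal a * x i))"
  then have A: "A \<in> sets borel" by simp
  have meas: "(\<lambda>x::'p \<Rightarrow> ennreal. \<lambda>i. ennreal a * x i) \<in> measurable \<nu> borel"
    using sa_meas measurable_cong_sets[OF sets refl] by blast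
  have space: "space \<nu> = UNIV" using sets_eq_imp_space_eq[OF sets] by simp
  have inv: "ennreal (1 / a) * (ennreal a * s) = s" for s
    using a by (simp add: mult.assoc[symmetric] ennreal_mult[symmetric])
  have inv2: "ennreal a * (ennreal (1 / a) * s) = s" for s
    using a by (simp add: mult.assoc[symmetric] ennreal_mult[symmetric])
  have pre: "(\<lambda>x i. ennreal a * x i) -` A \<inter> space \<nu> = (\<lambda>x i. ennreal (1 / a) * x i) ` A"
  proof safe
    fix y assume yA: "(\<lambda>i. ennreal a * y i) \<in> A"
    have "y = (\<lambda>i. ennreal (1 / a) * ((\<lambda>i. ennreal a * y i) i))"
      by (simp add: inv)
    then show "y \<in> (\<lambda>x i. ennreal (1 / a) * x i) ` A" by (rule image_eqI[OF _ yA])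
  next
    fix x assume "x \<in> A"
    then show "(\<lambda>i. ennreal (1 / a) * x i) \<in> (\<lambda>x i. ennreal a * x i) -` A"
      by (simp add: inv2)
  qed (simp add: space)
  have "emeasure (distr \<nu> borel (\<lambda>x i. ennreal a * x i)) A = emeasure \<nu> ((\<lambda>x i. ennreal (1 / a) * x i) ` A)"
    using meas A by (simp add: emeasure_distr pre)
  also have "\<dots> = ennreal ((1 / a) powr (-\<alpha>)) * emeasure \<nu> A"
    using hom a A by simp
  also have "(1 / a) powr (-\<alpha>) = a powr \<alpha>"
    using a by (simp add: powr_minus powr_divide)
  finally show "emeasure (distr \<nu> borel (\<lambda>x i. ennreal a * x i)) A =
      emeasure (scale_measure (ennreal (a powr \<alpha>)) \<nu>) A"
    by simp
qed

lemma int_g_finite: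
  fixes \<nu> :: "('p::finite \<Rightarrow> ennreal) measure"
  assumes r: "radon_E \<nu>" and c: "c > 0"
  shows "(\<integral>\<^sup>+ x. ennreal (gfun c x) \<partial>\<nu>) < \<infinity>"
proof -
  define K where "K = {x::'p \<Rightarrow> ennreal. \<exists>i. x i \<ge> ennreal (c / 2)}"
  have "- K = {x::'p \<Rightarrow> ennreal. \<forall>i. x i < ennreal (c / 2)}"
    by (auto simp: K_def not_le) (metis not_le)
  then have "closed K" using open_box[of "ennreal (c/2)"]
    by (metis closed_open double_complement)
  then have "compact K"
    using compact_Int_closed[OF compact_UNIV_fun] by fastforce
  moreover have "(\<lambda>_. 0) \<notin> K" using c by (simp add: K_def)
  ultimately have fin: "emeasure \<nu> K < \<infinity>" using r by (simp add: radon_E_def)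
  have sets: "sets \<nu> = sets borel" using r by (simp add: radon_E_def)
  have Ks: "K \<in> sets \<nu>" using \<open>closed K\<close> sets by simp
  have "(\<integral>\<^sup>+ x. ennreal (gfun c x) \<partial>\<nu>) \<le> (\<integral>\<^sup>+ x. indicator K x \<partial>\<nu>)"
  proof (rule nn_integral_mono)
    fix x
    show "ennreal (gfun c x) \<le> indicator K x"
    proof (cases "x \<in> K")
      case True then show ?thesis by (simp add: gfun_le1)
    next
      case False
      then have "\<not> (ennreal (c / 2) \<le> x i)" for i unfolding K_def by blast
      then have "\<forall>i. x i \<le> ennreal (c / 2)" by (meson le_cases)
      then show ?thesis using c by (simp add: gfun_zero)
    qed
  qed
  also have "\<dots> = emeasure \<nu> K" using Ks by simp
  finally show ?thesis using fin by simp
qed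


lemma approx_lim:
  fixes I J :: "nat \<Rightarrow> ennreal"
  assumes I: "I \<longlonglongrightarrow> L" and L: "L < \<infinity>"
    and close: "\<And>e. e > 0 \<Longrightarrow> eventually (\<lambda>n. J n \<le> I n + ennreal e \<and> I n \<le> J n + ennreal e) sequentially"
  shows "J \<longlonglongrightarrow> L"
proof -
  obtain l where l: "L = ennreal l" "l \<ge> 0" using L by (cases L) auto
  show ?thesis
  proof (rule order_tendstoI)
    fix x assume x: "x < L"
    then obtain xr where xr: "x = ennreal xr" "xr \<ge> 0" using L by (cases x) auto
    have xl: "xr < l" using x xr l by (simp add: ennreal_less_iff)
    define e where "e = (l - xr) / 2"
    have e: "e > 0" using xl by (simp add: e_def)
    have "xr + e < l" using xl by (simp add: e_def field_simps)
    then have "ennreal (xr + e) < L" unfolding l using xr e by (subst ennreal_less_iff) auto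
    then have ev: "eventually (\<lambda>n. ennreal (xr + e) < I n) sequentially"
      by (rule order_tendstoD(1)[OF I])
    show "eventually (\<lambda>n. x < J n) sequentially"
      using ev close[OF e]
    proof eventually_elim
      case (elim n)
      show "x < J n"
      proof (rule ccontr)
        assume "\<not> x < J n"
        then have "J n \<le> x" by simp
        then have "J n + ennreal e \<le> x + ennreal e" by (rule add_right_mono)
        also have "\<dots> = ennreal (xr + e)" using xr e by (simp add: ennreal_plus)
        finally show False using elim by auto
      qed
    qed
  next
    fix x assume x: "L < x"
    define e where "e = (if x = \<top> then 1 else (enn2real x - l) / 3)"
    have e: "e > 0"
    proof (cases "x = \<top>")
      case False
      then obtain xr where "x = ennreal xr" "xr \<ge> 0" by (cases x) auto
      then show ?thesis using x l False by (simp add: e_def ennreal_less_iff)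
    qed (simp add: e_def)
    have le: "ennreal (l + 2 * e) < x"
    proof (cases "x = \<top>")
      case False
      then obtain xr where xr: "x = ennreal xr" "xr \<ge> 0" by (cases x) auto
      then have "l < xr" using x l by (simp add: ennreal_less_iff)
      then have "l + 2 * e < xr" using xr False by (simp add: e_def field_simps)
      then show ?thesis unfolding xr using e l by (subst ennreal_less_iff) auto
    qed (simp add: e_def)
    have "L < ennreal (l + e)" using l e by (simp add: ennreal_less_iff)
    then have ev: "eventually (\<lambda>n. I n < ennreal (l + e)) sequentially"
      by (rule order_tendstoD(2)[OF I])
    show "eventually (\<lambda>n. J n < x) sequentially"
      using ev close[OF e]
    proof eventually_elim
      case (elim n)
      then have "I n < \<top>" using top.not_eq_extremum by fastforce
      then obtain i where i: "I n = ennreal i" "i \<ge> 0" by (cases "I n") auto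
      have "ennreal i < ennreal (l + e)" using elim i by simp
      then have "i < l + e" using i l e by (subst (asm) ennreal_less_iff) auto
      have "J n \<le> ennreal i + ennreal e" using elim i by simp
      also have "\<dots> = ennreal (i + e)" using i e by (simp add: ennreal_plus)
      also have "\<dots> \<le> ennreal (l + 2 * e)" using \<open>i < l + e\<close> by (simp add: ennreal_leI)
      finally show ?case using le by simp
    qed
  qed
qed


lemma rep:
  fixes g :: "'a \<Rightarrow> 'p::finite \<Rightarrow> ennreal" and f :: "('p \<Rightarrow> ennreal) \<Rightarrow> real"
  assumes g: "g \<in> borel_measurable M" and f: "continuous_on UNIV f"
  shows "(\<integral>\<^sup>+ x. ennreal (f x) \<partial>(scale_measure r (distr M borel g))) = r * (\<integral>\<^sup>+ \<omega>. ennreal (f (g \<omega>)) \<partial>M)"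
proof -
  have fm: "(\<lambda>x. ennreal (f x)) \<in> borel_measurable borel"
    using borel_measurable_continuous_onI[OF f] by measurable
  have eq: "measurable (distr M borel g) borel = measurable borel (borel :: ennreal measure)"
    by (rule measurable_cong_sets) simp_all
  have fm': "(\<lambda>x. ennreal (f x)) \<in> borel_measurable (distr M borel g)"
    using fm unfolding eq .
  have "(\<integral>\<^sup>+ x. ennreal (f x) \<partial>(scale_measure r (distr M borel g))) = r * (\<integral>\<^sup>+ x. ennreal (f x) \<partial>(distr M borel g))"
    by (rule nn_integral_scale_measure[OF fm'])
  also have "(\<integral>\<^sup>+ x. ennreal (f x) \<partial>(distr M borel g)) = (\<integral>\<^sup>+ \<omega>. ennreal (f (g \<omega>)) \<partial>M)"
    by (rule nn_integral_distr[OF g fm'])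
  finally show ?thesis .
qed

lemma div_ge:
  assumes b: "b > 0" and d: "d \<ge> 0" and le: "ennreal d \<le> t / ennreal b"
  shows "ennreal (d * b) \<le> t"
proof (cases t)
  case (real r)
  then have "t / ennreal b = ennreal (r / b)" using b by (simp add: divide_ennreal)
  then have "d \<le> r / b" using le real d b by (simp add: ennreal_le_iff)
  then have "d * b \<le> r" using b by (simp add: field_simps)
  then show ?thesis using real by (simp add: ennreal_leI)
qed simp

lemma f_box:
  fixes f :: "('p::finite \<Rightarrow> ennreal) \<Rightarrow> real"
  assumes U: "open U" "(\<lambda>_. 0) \<in> U" "\<forall>x\<in>U. f x = 0"
  shows "\<exists>d>0. \<forall>x. (\<forall>i. x i < ennreal d) \<longrightarrow> f x = 0"
  using box_in_open[OF U(1,2)] U(3) by blast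

lemma f_bound:
  fixes f :: "('p::finite \<Rightarrow> ennreal) \<Rightarrow> real"
  assumes "continuous_on UNIV f"
  shows "\<exists>B. \<forall>x. f x \<le> B"
  using continuous_attains_sup[OF compact_UNIV_fun _ assms] by blast

lemma cmeas:
  fixes f :: "('p::finite \<Rightarrow> ennreal) \<Rightarrow> real"
  assumes f: "continuous_on UNIV f" and g: "g \<in> borel_measurable M"
  shows "(\<lambda>\<omega>. ennreal (f (g \<omega>))) \<in> borel_measurable M"
proof -
  have "(\<lambda>x. ennreal (f x)) \<in> borel_measurable borel"
    using borel_measurable_continuous_onI[OF f] by measurable
  then show ?thesis using measurable_compose[OF g] by blast
qed

lemma ennreal_scale_inv:
  assumes a: "a > 0" and le: "ennreal d \<le> ennreal a * s" and d: "d \<ge> 0"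
  shows "ennreal (d / a) \<le> s"
proof -
  have "ennreal (d / a) = ennreal (1 / a) * ennreal d" using a d by (simp add: ennreal_mult[symmetric])
  also have "\<dots> \<le> ennreal (1 / a) * (ennreal a * s)" using le by (rule mult_left_mono) simp
  also have "\<dots> = s" using a by (simp add: mult.assoc[symmetric] ennreal_mult[symmetric])
  finally show ?thesis .
qed


lemma case_pos:
  fixes M :: "'a measure" and X :: "'a \<Rightarrow> 'p::finite \<Rightarrow> real" and b :: "nat \<Rightarrow> real"
    and \<nu> :: "('p \<Rightarrow> ennreal) measure" and \<alpha> a :: real
  assumes Xm: "X \<in> borel_measurable M" and Xnn: "\<forall>\<omega>\<in>space M. \<forall>i. 0 \<le> X \<omega> i"
    and b: "filterlim b at_top sequentially" and r: "radon_E \<nu>"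
    and hom: "\<forall>t>0. \<forall>A\<in>sets borel. emeasure \<nu> ((\<lambda>x. \<lambda>i. ennreal t * x i) ` A) = ennreal (t powr (-\<alpha>)) * emeasure \<nu> A"
    and vc: "vague_conv (\<lambda>n. scale_measure (of_nat n) (distr M borel (\<lambda>\<omega>. scalev (b n) (emb (X \<omega>))))) \<nu>"
    and a: "a > 0"
  shows "vague_conv (\<lambda>n. scale_measure (of_nat n) (distr M borel (\<lambda>\<omega>. scalev (b n) (tcirc a (X \<omega>)))))
            (scale_measure (ennreal (a powr \<alpha>)) \<nu>)"
  unfolding vague_conv_def
proof (intro allI impI)
  fix f :: "('p \<Rightarrow> ennreal) \<Rightarrow> real"
  assume fa: "continuous_on UNIV f \<and> (\<forall>x. 0 \<le> f x) \<and> (\<exists>U. open U \<and> (\<lambda>_. 0) \<in> U \<and> (\<forall>x\<in>U. f x = 0))"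
  then have fc: "continuous_on UNIV f" and fnn: "\<And>x. 0 \<le> f x" by auto
  from fa obtain U where U: "open U" "(\<lambda>_. 0) \<in> U" "\<forall>x\<in>U. f x = 0" by blast
  obtain \<delta> where \<delta>: "\<delta> > 0" "\<And>x. (\<forall>i. x i < ennreal \<delta>) \<Longrightarrow> f x = 0"
    using f_box[OF U] by blast
  obtain Bf where Bf: "\<And>x. f x \<le> Bf" using f_bound[OF fc] by blast
  have sets: "sets \<nu> = sets borel" using r by (simp add: radon_E_def)
  define sa :: "('p \<Rightarrow> ennreal) \<Rightarrow> ('p \<Rightarrow> ennreal)" where "sa = (\<lambda>x i. ennreal a * x i)"
  define Z where "Z n \<omega> = scalev (b n) (emb (X \<omega>))" for n \<omega>
  define Y where "Y n \<omega> = scalev (b n) (tcirc a (X \<omega>))" for n \<omega>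
  have Zm: "Z n \<in> borel_measurable M" for n
    unfolding Z_def using Z_meas[OF Xm] .
  have Ym: "Y n \<in> borel_measurable M" for n
    unfolding Y_def using Y_meas[OF Xm] .
  have sac: "continuous_on UNIV sa" unfolding sa_def by (rule sa_cont)
  have fsac: "continuous_on UNIV (\<lambda>x. f (sa x))"
    by (rule continuous_on_compose2[OF fc sac]) auto
  define I where "I n = (\<integral>\<^sup>+ x. ennreal (f (sa x)) \<partial>(scale_measure (of_nat n) (distr M borel (Z n))))" for n
  define L where "L = (\<integral>\<^sup>+ x. ennreal (f (sa x)) \<partial>\<nu>)"
  have IL: "I \<longlonglongrightarrow> L"
  proof -
    have "continuous_on UNIV (\<lambda>x. f (sa x)) \<and> (\<forall>x. 0 \<le> f (sa x)) \<and>
        (\<exists>U. open U \<and> (\<lambda>_. 0) \<in> U \<and> (\<forall>x\<in>U. f (sa x) = 0))"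
    proof (intro conjI exI)
      show "open (sa -` U)" by (rule open_vimage[OF U(1) sac])
      show "(\<lambda>_. 0) \<in> sa -` U" using U(2) by (simp add: sa_def)
      show "\<forall>x\<in>sa -` U. f (sa x) = 0" using U(3) by auto
    qed (use fsac fnn in auto)
    from vc[unfolded vague_conv_def, THEN spec, of "\<lambda>x. f (sa x)", THEN mp, OF this]
    show ?thesis unfolding I_def L_def Z_def .
  qed
  have fm: "(\<lambda>x. ennreal (f x)) \<in> borel_measurable borel"
    using borel_measurable_continuous_onI[OF fc] by measurable
  have Lpush: "L = (\<integral>\<^sup>+ x. ennreal (f x) \<partial>(scale_measure (ennreal (a powr \<alpha>)) \<nu>))"
  proof -
    have sam: "sa \<in> measurable \<nu> borel"
      using sa_meas measurable_cong_sets[OF sets refl] unfolding sa_def by blast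
    have eq: "measurable (distr \<nu> borel sa) borel = measurable borel (borel :: ennreal measure)"
      by (rule measurable_cong_sets) simp_all
    have fm': "(\<lambda>x. ennreal (f x)) \<in> borel_measurable (distr \<nu> borel sa)"
      using fm unfolding eq .
    have "L = (\<integral>\<^sup>+ x. ennreal (f x) \<partial>(distr \<nu> borel sa))"
      using nn_integral_distr[OF sam fm'] by (simp add: L_def)
    also have "distr \<nu> borel sa = scale_measure (ennreal (a powr \<alpha>)) \<nu>"
      using push[OF a sets hom] by (simp add: sa_def)
    finally show ?thesis .
  qed
  have Lfin: "L < \<infinity>"
  proof -
    have da: "\<delta> / a > 0" using \<delta> a by simp
    have pw: "ennreal (f (sa x)) \<le> ennreal Bf * ennreal (gfun (\<delta> / a) x)" for x
    proof (cases "\<forall>i. sa x i < ennreal \<delta>")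
      case True
      then show ?thesis using \<delta>(2) by simp
    next
      case False
      then obtain i where "ennreal \<delta> \<le> sa x i" by (auto simp: not_less)
      then have "ennreal (\<delta> / a) \<le> x i"
        using a \<delta> by (intro ennreal_scale_inv) (auto simp: sa_def)
      then have "gfun (\<delta> / a) x = 1" using da by (intro gfun_one)
      then show ?thesis using Bf[of "sa x"] by (simp add: ennreal_leI)
    qed
    have gm0: "(\<lambda>x. ennreal (gfun (\<delta> / a) x)) \<in> borel_measurable borel"
      using borel_measurable_continuous_onI[OF gfun_cont] by measurable
    have gm: "(\<lambda>x. ennreal (gfun (\<delta> / a) x)) \<in> borel_measurable \<nu>"
      using gm0 measurable_cong_sets[OF sets refl] by blast
    have "L \<le> (\<integral>\<^sup>+ x. ennreal Bf * ennreal (gfun (\<delta> / a) x) \<partial>\<nu>)"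
      unfolding L_def by (rule nn_integral_mono) (rule pw)
    also have "\<dots> = ennreal Bf * (\<integral>\<^sup>+ x. ennreal (gfun (\<delta> / a) x) \<partial>\<nu>)"
      by (rule nn_integral_cmult[OF gm])
    also have "\<dots> < \<infinity>"
      using int_g_finite[OF r da] by (simp add: ennreal_mult_less_top)
    finally show ?thesis .
  qed
  define J where "J n = (\<integral>\<^sup>+ x. ennreal (f x) \<partial>(scale_measure (of_nat n) (distr M borel (Y n))))" for n
  have JL: "J \<longlonglongrightarrow> L"
  proof (rule approx_lim[OF IL Lfin])
    fix e :: real assume e: "e > 0"
    define c where "c = \<delta> / (2 * a)"
    have c: "c > 0" using \<delta> a by (simp add: c_def)
    define gX where "gX n = (\<integral>\<^sup>+ x. ennreal (gfun c x) \<partial>(scale_measure (of_nat n) (distr M borel (Z n))))" for n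
    define G where "G = (\<integral>\<^sup>+ x. ennreal (gfun c x) \<partial>\<nu>)"
    have gXG: "gX \<longlonglongrightarrow> G"
    proof -
      define V where "V = {x::'p \<Rightarrow> ennreal. \<forall>i. x i < ennreal (c / 2)}"
      have V3: "gfun c x = 0" if "x \<in> V" for x
      proof -
        have "x i \<le> ennreal (c / 2)" for i using that unfolding V_def
          by (metis (mono_tags, lifting) mem_Collect_eq order.strict_implies_order)
        then show ?thesis using c by (intro gfun_zero) auto
      qed
      have V1: "open V" unfolding V_def by (rule open_box)
      have V2: "(\<lambda>_. 0) \<in> V" using c by (simp add: V_def)
      have "\<exists>U::('p \<Rightarrow> ennreal) set. open U \<and> (\<lambda>_. 0) \<in> U \<and> (\<forall>x\<in>U. gfun c x = (0::real))"
        using V1 V2 V3 by (intro exI[of _ V] conjI ballI)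
      then have "continuous_on UNIV (gfun c :: ('p \<Rightarrow> ennreal) \<Rightarrow> real) \<and> (\<forall>x::'p \<Rightarrow> ennreal. 0 \<le> gfun c x) \<and>
          (\<exists>U::('p \<Rightarrow> ennreal) set. open U \<and> (\<lambda>_. 0) \<in> U \<and> (\<forall>x\<in>U. gfun c x = 0))"
        by (intro conjI allI gfun_cont gfun_nonneg)
      from vc[unfolded vague_conv_def, THEN spec, of "gfun c", THEN mp, OF this]
      show ?thesis unfolding gX_def G_def Z_def .
    qed
    have Gfin: "G < \<infinity>" unfolding G_def by (rule int_g_finite[OF r c])
    define Kb where "Kb = enn2real G + 1"
    have Kb: "Kb > 0" by (simp add: Kb_def add_nonneg_pos)
    have "G < ennreal Kb"
      using Gfin by (cases G) (auto simp: Kb_def ennreal_less_iff)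
    then have ev1: "eventually (\<lambda>n. gX n < ennreal Kb) sequentially"
      by (rule order_tendstoD(2)[OF gXG])
    define \<epsilon> where "\<epsilon> = e / Kb"
    have \<epsilon>: "\<epsilon> > 0" using e Kb by (simp add: \<epsilon>_def)
    have \<epsilon>Kb: "\<epsilon> * Kb = e" using Kb by (simp add: \<epsilon>_def)
    obtain \<eta> where \<eta>: "\<eta> > 0"
      "\<And>x y. (\<forall>i. x i \<le> y i + ennreal \<eta> \<and> y i \<le> x i + ennreal \<eta>) \<Longrightarrow> \<bar>f x - f y\<bar> < \<epsilon>"
      using unif_close[OF fc \<epsilon>] by blast
    define C where "C = (a + 1) * ln 2"
    have C: "C \<ge> 0" using a by (simp add: C_def)
    have ev2: "eventually (\<lambda>n. b n \<ge> 1 + C / \<eta> + 2 * C / \<delta>) sequentially"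
      using b by (simp add: filterlim_at_top)
    show "eventually (\<lambda>n. J n \<le> I n + ennreal e \<and> I n \<le> J n + ennreal e) sequentially"
      using ev1 ev2
    proof eventually_elim
      case (elim n)
      have CE: "C / \<eta> \<ge> 0" "2 * C / \<delta> \<ge> 0" using C \<eta> \<delta> by auto
      then have bn: "b n > 0" using elim by linarith
      have "C / \<eta> \<le> b n" using elim CE by linarith
      then have bn1: "C / b n \<le> \<eta>" using bn \<eta> by (simp add: field_simps)
      have "2 * C / \<delta> \<le> b n" using elim CE by linarith
      then have bn2: "C / b n \<le> \<delta> / 2" using bn \<delta> by (simp add: field_simps)
      have pw: "ennreal (f (Y n \<omega>)) \<le> ennreal (f (sa (Z n \<omega>))) + ennreal \<epsilon> * ennreal (gfun c (Z n \<omega>)) \<and>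
                ennreal (f (sa (Z n \<omega>))) \<le> ennreal (f (Y n \<omega>)) + ennreal \<epsilon> * ennreal (gfun c (Z n \<omega>))"
        if \<omega>: "\<omega> \<in> space M" for \<omega>
      proof -
        have Xi: "X \<omega> i \<ge> 0" for i using Xnn \<omega> by blast
        have Yi: "Y n \<omega> i = ennreal (Tre a (X \<omega> i) / b n)" for i
          unfolding Y_def scalev_def tcirc_def using tfun_pos[OF a Xi[of i]] bn Tre_nonneg[of a "X \<omega> i"]
          by (simp add: divide_ennreal)
        have Zi: "sa (Z n \<omega>) i = ennreal (a * X \<omega> i / b n)" for i
        proof -
          have "sa (Z n \<omega>) i = ennreal a * (ennreal (X \<omega> i) / ennreal (b n))"
            unfolding Z_def sa_def scalev_def emb_def by simp
          also have "\<dots> = ennreal a * ennreal (X \<omega> i / b n)"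
            using Xi[of i] bn by (simp add: divide_ennreal)
          also have "\<dots> = ennreal (a * (X \<omega> i / b n))"
            using Xi[of i] bn a by (subst ennreal_mult) auto
          finally show ?thesis by simp
        qed
        have cl: "\<bar>Tre a (X \<omega> i) / b n - a * X \<omega> i / b n\<bar> \<le> C / b n" for i
        proof -
          have "\<bar>Tre a (X \<omega> i) - a * X \<omega> i\<bar> \<le> C" using Tre_bound[OF a Xi[of i]] by (simp add: C_def)
          then have "\<bar>Tre a (X \<omega> i) - a * X \<omega> i\<bar> / b n \<le> C / b n" using bn by (simp add: divide_right_mono)
          then show ?thesis using bn by (simp add: diff_divide_distrib[symmetric] abs_divide)
        qed
        have u0: "Tre a (X \<omega> i) / b n \<ge> 0" for i using Tre_nonneg[of a "X \<omega> i"] bn by simp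
        have v0: "a * X \<omega> i / b n \<ge> 0" for i using Xi[of i] bn a by simp
        show ?thesis
        proof (cases "\<forall>i. sa (Z n \<omega>) i < ennreal (\<delta> / 2)")
          case True
          have v: "a * X \<omega> i / b n < \<delta> / 2" for i
          proof -
            have "ennreal (a * X \<omega> i / b n) < ennreal (\<delta> / 2)" using True Zi[of i] by metis
            then show ?thesis using \<delta> v0[of i] by (subst (asm) ennreal_less_iff) auto
          qed
          have u: "Tre a (X \<omega> i) / b n < \<delta>" for i
            using v[of i] cl[of i] bn2 unfolding abs_le_iff by linarith
          have "Y n \<omega> i < ennreal \<delta>" for i
            unfolding Yi using u[of i] \<delta> by (simp add: ennreal_lessI)
          then have f1: "f (Y n \<omega>) = 0" using \<delta>(2) by blast
          have "sa (Z n \<omega>) i < ennreal \<delta>" for i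
            unfolding Zi using v[of i] \<delta> by (intro ennreal_lessI) linarith+
          then have f2: "f (sa (Z n \<omega>)) = 0" using \<delta>(2) by blast
          show ?thesis using f1 f2 by simp
        next
          case False
          then obtain i where "ennreal (\<delta> / 2) \<le> sa (Z n \<omega>) i" by (auto simp: not_less)
          then have h: "ennreal (\<delta> / 2) \<le> ennreal a * Z n \<omega> i" by (simp only: sa_def)
          have "ennreal (\<delta> / 2 / a) \<le> Z n \<omega> i"
            by (rule ennreal_scale_inv[OF a h]) (use \<delta> in simp)
          then have "ennreal c \<le> Z n \<omega> i" by (simp add: c_def)
          then have g1: "gfun c (Z n \<omega>) = 1" using c by (intro gfun_one)
          have "Y n \<omega> i \<le> sa (Z n \<omega>) i + ennreal \<eta> \<and> sa (Z n \<omega>) i \<le> Y n \<omega> i + ennreal \<eta>" for i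
          proof -
            have "Tre a (X \<omega> i) / b n \<le> a * X \<omega> i / b n + \<eta>"
              "a * X \<omega> i / b n \<le> Tre a (X \<omega> i) / b n + \<eta>"
              using cl[of i] bn1 unfolding abs_le_iff by linarith+
            then have "ennreal (Tre a (X \<omega> i) / b n) \<le> ennreal (a * X \<omega> i / b n + \<eta>)"
              "ennreal (a * X \<omega> i / b n) \<le> ennreal (Tre a (X \<omega> i) / b n + \<eta>)"
              by (auto intro: ennreal_leI)
            moreover have "ennreal (a * X \<omega> i / b n + \<eta>) = ennreal (a * X \<omega> i / b n) + ennreal \<eta>"
              using v0[of i] \<eta> by (intro ennreal_plus) auto
            moreover have "ennreal (Tre a (X \<omega> i) / b n + \<eta>) = ennreal (Tre a (X \<omega> i) / b n) + ennreal \<eta>"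
              using u0[of i] \<eta> by (intro ennreal_plus) auto
            ultimately show ?thesis unfolding Yi Zi by simp

          qed
          then have "\<bar>f (Y n \<omega>) - f (sa (Z n \<omega>))\<bar> < \<epsilon>" by (intro \<eta>(2)) blast
          then have h: "f (Y n \<omega>) \<le> f (sa (Z n \<omega>)) + \<epsilon>" "f (sa (Z n \<omega>)) \<le> f (Y n \<omega>) + \<epsilon>"
            unfolding abs_less_iff by linarith+
          have p1: "ennreal (f (sa (Z n \<omega>)) + \<epsilon>) = ennreal (f (sa (Z n \<omega>))) + ennreal \<epsilon>"
            using fnn \<epsilon> by (intro ennreal_plus) auto
          have p2: "ennreal (f (Y n \<omega>) + \<epsilon>) = ennreal (f (Y n \<omega>)) + ennreal \<epsilon>"
            using fnn \<epsilon> by (intro ennreal_plus) auto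
          show ?thesis unfolding g1 using ennreal_leI[OF h(1)] ennreal_leI[OF h(2)] p1 p2 by simp
        qed
      qed
      have m1: "(\<lambda>\<omega>. ennreal (f (Y n \<omega>))) \<in> borel_measurable M" by (rule cmeas[OF fc Ym])
      have m2: "(\<lambda>\<omega>. ennreal (f (sa (Z n \<omega>)))) \<in> borel_measurable M" by (rule cmeas[OF fsac Zm])
      have m3: "(\<lambda>\<omega>. ennreal (gfun c (Z n \<omega>))) \<in> borel_measurable M" by (rule cmeas[OF gfun_cont Zm])
      have m3': "(\<lambda>\<omega>. ennreal \<epsilon> * ennreal (gfun c (Z n \<omega>))) \<in> borel_measurable M" using m3 by measurable
      define A1 where "A1 = (\<integral>\<^sup>+ \<omega>. ennreal (f (Y n \<omega>)) \<partial>M)"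
      define A2 where "A2 = (\<integral>\<^sup>+ \<omega>. ennreal (f (sa (Z n \<omega>))) \<partial>M)"
      define A3 where "A3 = (\<integral>\<^sup>+ \<omega>. ennreal (gfun c (Z n \<omega>)) \<partial>M)"
      have i1: "A1 \<le> A2 + ennreal \<epsilon> * A3"
      proof -
        have "A1 \<le> (\<integral>\<^sup>+ \<omega>. ennreal (f (sa (Z n \<omega>))) + ennreal \<epsilon> * ennreal (gfun c (Z n \<omega>)) \<partial>M)"
          unfolding A1_def by (rule nn_integral_mono) (use pw in blast)
        also have "\<dots> = A2 + ennreal \<epsilon> * A3"
          unfolding A2_def A3_def by (simp add: nn_integral_add[OF m2 m3'] nn_integral_cmult[OF m3])
        finally show ?thesis .
      qed
      have i2: "A2 \<le> A1 + ennreal \<epsilon> * A3"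
      proof -
        have "A2 \<le> (\<integral>\<^sup>+ \<omega>. ennreal (f (Y n \<omega>)) + ennreal \<epsilon> * ennreal (gfun c (Z n \<omega>)) \<partial>M)"
          unfolding A2_def by (rule nn_integral_mono) (use pw in blast)
        also have "\<dots> = A1 + ennreal \<epsilon> * A3"
          unfolding A1_def A3_def by (simp add: nn_integral_add[OF m1 m3'] nn_integral_cmult[OF m3])
        finally show ?thesis .
      qed
      have J: "J n = of_nat n * A1" unfolding J_def A1_def by (rule rep[OF Ym fc])
      have I: "I n = of_nat n * A2" unfolding I_def A2_def by (rule rep[OF Zm fsac])
      have gX: "gX n = of_nat n * A3" unfolding gX_def A3_def by (rule rep[OF Zm gfun_cont])
      have eK: "ennreal \<epsilon> * gX n \<le> ennreal e"
      proof -
        have "ennreal \<epsilon> * gX n \<le> ennreal \<epsilon> * ennreal Kb"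
          using elim by (intro mult_left_mono) auto
        also have "\<dots> = ennreal e" using \<epsilon> Kb \<epsilon>Kb by (simp add: ennreal_mult[symmetric])
        finally show ?thesis .
      qed
      have "J n \<le> of_nat n * (A2 + ennreal \<epsilon> * A3)" unfolding J using i1 by (rule mult_left_mono) simp
      also have "\<dots> = I n + ennreal \<epsilon> * gX n" unfolding I gX by (simp add: distrib_left mult.left_commute)
      also have "\<dots> \<le> I n + ennreal e" using eK by (rule add_left_mono)
      finally have j1: "J n \<le> I n + ennreal e" .
      have "I n \<le> of_nat n * (A1 + ennreal \<epsilon> * A3)" unfolding I using i2 by (rule mult_left_mono) simp
      also have "\<dots> = J n + ennreal \<epsilon> * gX n" unfolding J gX by (simp add: distrib_left mult.left_commute)
      also have "\<dots> \<le> J n + ennreal e" using eK by (rule add_left_mono)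
      finally have j2: "I n \<le> J n + ennreal e" .
      show ?case using j1 j2 by blast
    qed
  qed
  show "(\<lambda>n. \<integral>\<^sup>+ x. ennreal (f x) \<partial>(scale_measure (of_nat n) (distr M borel (\<lambda>\<omega>. scalev (b n) (tcirc a (X \<omega>))))))
        \<longlonglongrightarrow> (\<integral>\<^sup>+ x. ennreal (f x) \<partial>(scale_measure (ennreal (a powr \<alpha>)) \<nu>))"
    using JL unfolding J_def Y_def Lpush .
qed

lemma case_nonpos:
  fixes M :: "'a measure" and X :: "'a \<Rightarrow> 'p::finite \<Rightarrow> real" and b :: "nat \<Rightarrow> real"
    and a :: real
  assumes P: "prob_space M" and Xm: "X \<in> borel_measurable M" and Xnn: "\<forall>\<omega>\<in>space M. \<forall>i. 0 \<le> X \<omega> i"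
    and b: "filterlim b at_top sequentially"
    and lower: "\<forall>k>0. \<forall>i. ((\<lambda>n. real n * measure M {\<omega> \<in> space M. X \<omega> i \<le> exp (- k * b n)})
                  \<longlongrightarrow> 0) sequentially"
    and a: "a \<le> 0"
  shows "vague_conv (\<lambda>n. scale_measure (of_nat n) (distr M borel (\<lambda>\<omega>. scalev (b n) (tcirc a (X \<omega>)))))
            (null_measure borel)"
  unfolding vague_conv_def
proof (intro allI impI)
  fix f :: "('p \<Rightarrow> ennreal) \<Rightarrow> real"
  assume fa: "continuous_on UNIV f \<and> (\<forall>x. 0 \<le> f x) \<and> (\<exists>U. open U \<and> (\<lambda>_. 0) \<in> U \<and> (\<forall>x\<in>U. f x = 0))"
  then have fc: "continuous_on UNIV f" and fnn: "\<And>x. 0 \<le> f x" by auto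
  from fa obtain U where U: "open U" "(\<lambda>_. 0) \<in> U" "\<forall>x\<in>U. f x = 0" by blast
  obtain \<delta> where \<delta>: "\<delta> > 0" "\<And>x. (\<forall>i. x i < ennreal \<delta>) \<Longrightarrow> f x = 0"
    using f_box[OF U] by blast
  obtain Bf where Bf: "\<And>x. f x \<le> Bf" using f_bound[OF fc] by blast
  have Bf0: "Bf \<ge> 0" using Bf[of "\<lambda>_. 0"] fnn[of "\<lambda>_. 0"] by simp
  interpret prob_space M by (rule P)
  define Y where "Y n \<omega> = scalev (b n) (tcirc a (X \<omega>))" for n \<omega>
  have Ym: "Y n \<in> borel_measurable M" for n
    unfolding Y_def using Y_meas[OF Xm] .
  define J where "J n = (\<integral>\<^sup>+ x. ennreal (f x) \<partial>(scale_measure (of_nat n) (distr M borel (Y n))))" for n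
  have Jrep: "J n = of_nat n * (\<integral>\<^sup>+ \<omega>. ennreal (f (Y n \<omega>)) \<partial>M)" for n
    unfolding J_def by (rule rep[OF Ym fc])
  have J0: "J \<longlonglongrightarrow> 0"
  proof (cases "a = 0")
    case True
    have ev: "eventually (\<lambda>n. b n \<ge> 1 + ln 2 / \<delta>) sequentially"
      using b by (simp add: filterlim_at_top)
    have "eventually (\<lambda>n. J n = 0) sequentially"
      using ev
    proof eventually_elim
      case (elim n)
      have l2: "ln 2 / \<delta> \<ge> (0::real)" using \<delta> by simp
      then have bn: "b n > 0" using elim by linarith
      have "ln 2 / \<delta> < b n" using elim by linarith
      then have lt: "ln 2 / b n < \<delta>" using bn \<delta> by (simp add: field_simps)
      have "f (Y n \<omega>) = 0" for \<omega>
      proof -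
        have "Y n \<omega> i = ennreal (ln 2 / b n)" for i
          unfolding Y_def scalev_def tcirc_def True tfun_zero using bn by (simp add: divide_ennreal)
        then have "Y n \<omega> i < ennreal \<delta>" for i using lt \<delta> by (simp add: ennreal_lessI)
        then show ?thesis using \<delta>(2) by blast
      qed
      then show ?case unfolding Jrep by simp
    qed
    then show ?thesis by (rule tendsto_eventually)
  next
    case False
    then have an: "a < 0" using a by simp
    define k where "k = \<delta> / (2 * (- a))"
    have k: "k > 0" using an \<delta> unfolding k_def by (intro divide_pos_pos) auto
    define S where "S n i = {\<omega> \<in> space M. X \<omega> i \<le> exp (- k * b n)}" for n i
    have Sm: "S n i \<in> sets M" for n i
    proof -
      have [measurable]: "(\<lambda>\<omega>. X \<omega> i) \<in> borel_measurable M" by (rule coord_meas[OF Xm])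
      show ?thesis unfolding S_def by measurable
    qed
    define R where "R n = ennreal Bf * (\<Sum>i\<in>UNIV. ennreal (real n * measure M (S n i)))" for n
    have R0: "R \<longlonglongrightarrow> 0"
    proof -
      have "(\<lambda>n. ennreal (real n * measure M (S n i))) \<longlonglongrightarrow> ennreal 0" for i
        using lower k unfolding S_def by (intro tendsto_ennrealI) blast
      then have "(\<lambda>n. \<Sum>i\<in>UNIV. ennreal (real n * measure M (S n i))) \<longlonglongrightarrow> (\<Sum>i\<in>(UNIV::'p set). 0)"
        by (intro tendsto_sum) simp
      then have "(\<lambda>n. ennreal Bf * (\<Sum>i\<in>UNIV. ennreal (real n * measure M (S n i)))) \<longlonglongrightarrow> ennreal Bf * 0"
        by (intro ennreal_tendsto_cmult) auto
      then show ?thesis unfolding R_def by simp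
    qed
    have ev: "eventually (\<lambda>n. b n \<ge> 1 + 2 / \<delta>) sequentially"
      using b by (simp add: filterlim_at_top)
    have "eventually (\<lambda>n. J n \<le> R n) sequentially"
      using ev
    proof eventually_elim
      case (elim n)
      have l2: "2 / \<delta> \<ge> (0::real)" using \<delta> by simp
      then have bn: "b n > 0" using elim by linarith
      have "2 / \<delta> \<le> b n" using elim by linarith
      then have B2: "\<delta> * b n \<ge> 2" using \<delta> by (simp add: field_simps)
      have pw: "ennreal (f (Y n \<omega>)) \<le> ennreal Bf * (\<Sum>i\<in>UNIV. indicator (S n i) \<omega>)"
        if \<omega>: "\<omega> \<in> space M" for \<omega>
      proof (cases "\<forall>i. Y n \<omega> i < ennreal \<delta>")
        case True
        then show ?thesis using \<delta>(2) by simp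
      next
        case False
        then obtain i where "ennreal \<delta> \<le> Y n \<omega> i" by (auto simp: not_less)
        then have "ennreal \<delta> \<le> tfun (ereal a * tinv (X \<omega> i)) / ennreal (b n)"
          by (simp add: Y_def scalev_def tcirc_def)
        then have "ennreal (\<delta> * b n) \<le> tfun (ereal a * tinv (X \<omega> i))"
          using bn \<delta> by (intro div_ge) auto
        then have "X \<omega> i \<le> exp (- (\<delta> * b n / (2 * (- a))))"
          using Xnn \<omega> B2 an by (intro tfun_neg) auto
        also have "- (\<delta> * b n / (2 * (- a))) = - k * b n" by (simp add: k_def)
        finally have "\<omega> \<in> S n i" using \<omega> by (simp add: S_def)
        then have "1 \<le> (\<Sum>j\<in>UNIV. indicator (S n j) \<omega> :: ennreal)"
          using member_le_sum[of i UNIV "\<lambda>j. indicator (S n j) \<omega> :: ennreal"] by simp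
        then have "ennreal Bf * 1 \<le> ennreal Bf * (\<Sum>j\<in>UNIV. indicator (S n j) \<omega>)"
          by (rule mult_left_mono) simp
        moreover have "ennreal (f (Y n \<omega>)) \<le> ennreal Bf * 1" using Bf by (simp add: ennreal_leI)
        ultimately show ?thesis by simp
      qed
      have "(\<integral>\<^sup>+ \<omega>. ennreal (f (Y n \<omega>)) \<partial>M) \<le> (\<integral>\<^sup>+ \<omega>. ennreal Bf * (\<Sum>i\<in>UNIV. indicator (S n i) \<omega>) \<partial>M)"
        by (rule nn_integral_mono) (rule pw)
      also have "\<dots> = ennreal Bf * (\<Sum>i\<in>UNIV. emeasure M (S n i))"
        using Sm by (simp add: nn_integral_cmult nn_integral_sum)
      finally have le: "(\<integral>\<^sup>+ \<omega>. ennreal (f (Y n \<omega>)) \<partial>M) \<le> ennreal Bf * (\<Sum>i\<in>UNIV. emeasure M (S n i))" .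
      have "J n \<le> of_nat n * (ennreal Bf * (\<Sum>i\<in>UNIV. emeasure M (S n i)))"
        unfolding Jrep using le by (rule mult_left_mono) simp
      also have "\<dots> = ennreal Bf * (\<Sum>i\<in>UNIV. of_nat n * emeasure M (S n i))"
        by (simp add: sum_distrib_left mult.left_commute)
      also have "\<dots> = R n"
        unfolding R_def by (simp add: emeasure_eq_measure ennreal_of_nat_eq_real_of_nat ennreal_mult'')
      finally show ?case .
    qed
    then show ?thesis
      by (intro tendsto_sandwich[OF _ _ tendsto_const R0]) auto
  qed
  show "(\<lambda>n. \<integral>\<^sup>+ x. ennreal (f x) \<partial>(scale_measure (of_nat n) (distr M borel (\<lambda>\<omega>. scalev (b n) (tcirc a (X \<omega>))))))
        \<longlonglongrightarrow> (\<integral>\<^sup>+ x. ennreal (f x) \<partial>(null_measure borel))"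
    using J0 unfolding J_def Y_def by simp
qed


theorem proposition3:
  fixes M :: "'a measure" and X :: "'a \<Rightarrow> 'p::finite \<Rightarrow> real" and b :: "nat \<Rightarrow> real"
    and \<nu> :: "('p \<Rightarrow> ennreal) measure" and \<alpha> a :: real
  assumes rv: "RV_plus \<alpha> M X b \<nu>"
    and lower: "\<forall>k>0. \<forall>i. ((\<lambda>n. real n * measure M {\<omega> \<in> space M. X \<omega> i \<le> exp (- k * b n)})
                  \<longlongrightarrow> 0) sequentially"
  shows "(a > 0 \<longrightarrow> vague_conv
            (\<lambda>n. scale_measure (of_nat n) (distr M borel (\<lambda>\<omega>. scalev (b n) (tcirc a (X \<omega>)))))
            (scale_measure (ennreal (a powr \<alpha>)) \<nu>))
       \<and> (a \<le> 0 \<longrightarrow> vague_conv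
            (\<lambda>n. scale_measure (of_nat n) (distr M borel (\<lambda>\<omega>. scalev (b n) (tcirc a (X \<omega>)))))
            (null_measure borel))"
proof -
  have P: "prob_space M" and Xm: "X \<in> borel_measurable M" and Xnn: "\<forall>\<omega>\<in>space M. \<forall>i. 0 \<le> X \<omega> i"
    and b: "filterlim b at_top sequentially" and r: "radon_E \<nu>"
    and hom: "\<forall>t>0. \<forall>A\<in>sets borel. emeasure \<nu> ((\<lambda>x. \<lambda>i. ennreal t * x i) ` A) = ennreal (t powr (-\<alpha>)) * emeasure \<nu> A"
    and vc: "vague_conv (\<lambda>n. scale_measure (of_nat n) (distr M borel (\<lambda>\<omega>. scalev (b n) (emb (X \<omega>))))) \<nu>"
    using rv unfolding RV_plus_def by auto
  show ?thesis
    using case_pos[OF Xm Xnn b r hom vc] case_nonpos[OF P Xm Xnn b lower] by auto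
qed

end
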